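(* Let $K\ge2$, $\mathcal{X}\subseteq\mathbb{R}^d$, $(X,Y)$ a random pair on $\mathcal{X}\times\mathbb{R}$ with $X$-marginal $P_X$, expert maps $f_k(\cdot;\theta_k)$ with $\theta=(\theta_1,\dots,\theta_K)\in\Theta=\prod_k\Theta_k$, and router logits $a(\cdot;\phi)\in\mathbb{R}^K$, $\phi\in\Phi$. Assume: (i) there exist $C_{\mathrm{mt}}>0,\alpha>0$ with $\mathbb{P}(\Delta(X;\phi)\le t)\le C_{\mathrm{mt}}t^\alpha$ for all $\phi\in\Phi$ and all $t>0$; (ii) there exist $B_Y,B_f>0$ with $|Y|\le B_Y$ a.s. and $|f_k(x;\theta_k)|\le B_f$ for all $k$, $x$, $\theta_k$; (iii) $\Theta\times\Phi$ carries a topology in which it is compact, in which each map $\theta_k\mapsto f_k(\cdot;\theta_k)$ is continuous into $L^2(P_X)$, and in which $\phi\mapsto a(\cdot;\phi)$ is continuous into $L^2(P_X)$ and into $L^\infty(P_X)$. Then $L_\tau$ $\Gamma$-converges to $L_0$ on $\Theta\times\Phi$ as $\tau\to0$. In particular: (a) if $(\theta_\tau,\phi_\tau)\to(\theta,\phi)$ as $\tau\to0$, then $L_0(\theta,\phi)\le\liminf_{\tau\to0}L_\tau(\theta_\tau,\phi_\tau)$; (b) for every $(\theta,\phi)$ there is a sequence $(\theta_\tau,\phi_\tau)\to(\theta,\phi)$ with $L_0(\theta,\phi)\ge\limsup_{\tau\to0}L_\tau(\theta_\tau,\phi_\tau)$; (c) any family of almost minimizers $(\theta_\tau,\phi_\tau)$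 with $L_\tau(\theta_\tau,\phi_\tau)-\inf L_\tau\to0$ is precompact, and every cluster point is a minimizer of $L_0$.
   Context: Softmax weights $p_k^{(\tau)}(x;\phi)=\exp(a_k(x;\phi)/\tau)/\sum_j\exp(a_j(x;\phi)/\tau)$; soft predictor $h_{\theta,\phi,\tau}=\sum_kp_k^{(\tau)}f_k(\cdot;\theta_k)$; soft risk $L_\tau(\theta,\phi)=\mathbb{E}[(Y-h_{\theta,\phi,\tau}(X))^2]$. Top-two margin $\Delta(x;\phi)=a_{(1)}(x;\phi)-a_{(2)}(x;\phi)$ (largest minus second-largest logit). Hard winner $k^\star(x;\phi)=\min\arg\max_ka_k(x;\phi)$, hard predictor $h_{\theta,\phi,0}(x)=f_{k^\star(x;\phi)}(x;\theta_{k^\star(x;\phi)})$, hard risk $L_0(\theta,\phi)=\mathbb{E}[(Y-h_{\theta,\phi,0}(X))^2]$. *)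

theory Defs
  imports "HOL-Probability.Probability"
begin

text \<open>Logit vectors are functions nat => real, only indices k < K matter.\<close>

definition softmax :: "nat \<Rightarrow> (nat \<Rightarrow> real) \<Rightarrow> real \<Rightarrow> nat \<Rightarrow> real" where
  "softmax K v \<tau> k = exp (v k / \<tau>) / (\<Sum>j<K. exp (v j / \<tau>))"

text \<open>Top-two margin: largest minus second-largest entry (with multiplicity).\<close>
definition margin :: "nat \<Rightarrow> (nat \<Rightarrow> real) \<Rightarrow> real" where
  "margin K v = (let l = rev (sort (map v [0..<K])) in l ! 0 - l ! 1)"

definition hard_winner :: "nat \<Rightarrow> (nat \<Rightarrow> real) \<Rightarrow> nat" where
  "hard_winner K v = (LEAST k. k < K \<and> (\<forall>j<K. v j \<le> v k))"

definition soft_pred ::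
  "nat \<Rightarrow> (nat \<Rightarrow> 't \<Rightarrow> 'x \<Rightarrow> real) \<Rightarrow> ('f \<Rightarrow> 'x \<Rightarrow> nat \<Rightarrow> real)
   \<Rightarrow> real \<Rightarrow> (nat \<Rightarrow> 't) \<times> 'f \<Rightarrow> 'x \<Rightarrow> real" where
  "soft_pred K f a \<tau> p x = (\<Sum>k<K. softmax K (a (snd p) x) \<tau> k * f k (fst p k) x)"

definition hard_pred ::
  "nat \<Rightarrow> (nat \<Rightarrow> 't \<Rightarrow> 'x \<Rightarrow> real) \<Rightarrow> ('f \<Rightarrow> 'x \<Rightarrow> nat \<Rightarrow> real)
   \<Rightarrow> (nat \<Rightarrow> 't) \<times> 'f \<Rightarrow> 'x \<Rightarrow> real" where
  "hard_pred K f a p x =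
     (let k = hard_winner K (a (snd p) x) in f k (fst p k) x)"

definition soft_risk ::
  "'w measure \<Rightarrow> ('w \<Rightarrow> 'x) \<Rightarrow> ('w \<Rightarrow> real) \<Rightarrow> nat \<Rightarrow> (nat \<Rightarrow> 't \<Rightarrow> 'x \<Rightarrow> real)
   \<Rightarrow> ('f \<Rightarrow> 'x \<Rightarrow> nat \<Rightarrow> real) \<Rightarrow> real \<Rightarrow> (nat \<Rightarrow> 't) \<times> 'f \<Rightarrow> real" where
  "soft_risk M X Y K f a \<tau> p = (\<integral>\<omega>. (Y \<omega> - soft_pred K f a \<tau> p (X \<omega>))\<^sup>2 \<partial>M)"

definition hard_risk ::
  "'w measure \<Rightarrow> ('w \<Rightarrow> 'x) \<Rightarrow> ('w \<Rightarrow> real) \<Rightarrow> nat \<Rightarrow> (nat \<Rightarrow> 't \<Rightarrow> 'x \<Rightarrow> real)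
   \<Rightarrow> ('f \<Rightarrow> 'x \<Rightarrow> nat \<Rightarrow> real) \<Rightarrow> (nat \<Rightarrow> 't) \<times> 'f \<Rightarrow> real" where
  "hard_risk M X Y K f a p = (\<integral>\<omega>. (Y \<omega> - hard_pred K f a p (X \<omega>))\<^sup>2 \<partial>M)"

definition in_L2 :: "'x measure \<Rightarrow> ('x \<Rightarrow> real) \<Rightarrow> bool" where
  "in_L2 P g \<longleftrightarrow> g \<in> borel_measurable P \<and> integrable P (\<lambda>x. (g x)\<^sup>2)"

definition in_Linf :: "'x measure \<Rightarrow> ('x \<Rightarrow> real) \<Rightarrow> bool" where
  "in_Linf P g \<longleftrightarrow> g \<in> borel_measurable P \<and> (\<exists>B. AE x in P. \<bar>g x\<bar> \<le> B)"

definition L2_continuous :: "'p topology \<Rightarrow> 'x measure \<Rightarrow> ('p \<Rightarrow> 'x \<Rightarrow> real) \<Rightarrow> bool" where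
  "L2_continuous T P F \<longleftrightarrow>
     (\<forall>p\<in>topspace T. \<forall>e>0. \<exists>U. openin T U \<and> p \<in> U \<and>
        (\<forall>q\<in>U. (\<integral>x. (F q x - F p x)\<^sup>2 \<partial>P) < e))"

definition Linf_continuous :: "'p topology \<Rightarrow> 'x measure \<Rightarrow> ('p \<Rightarrow> 'x \<Rightarrow> real) \<Rightarrow> bool" where
  "Linf_continuous T P F \<longleftrightarrow>
     (\<forall>p\<in>topspace T. \<forall>e>0. \<exists>U. openin T U \<and> p \<in> U \<and>
        (\<forall>q\<in>U. AE x in P. \<bar>F q x - F p x\<bar> \<le> e))"

text \<open>Gamma-convergence (topological definition, Dal Maso) of F tau to F0 as tau -> 0+.\<close>
definition gamma_liminf :: "'p topology \<Rightarrow> (real \<Rightarrow> 'p \<Rightarrow> real) \<Rightarrow> 'p \<Rightarrow> ereal" where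
  "gamma_liminf T F p =
     (SUP U\<in>{U. openin T U \<and> p \<in> U}. Liminf (at_right 0) (\<lambda>\<tau>. INF q\<in>U. ereal (F \<tau> q)))"

definition gamma_limsup :: "'p topology \<Rightarrow> (real \<Rightarrow> 'p \<Rightarrow> real) \<Rightarrow> 'p \<Rightarrow> ereal" where
  "gamma_limsup T F p =
     (SUP U\<in>{U. openin T U \<and> p \<in> U}. Limsup (at_right 0) (\<lambda>\<tau>. INF q\<in>U. ereal (F \<tau> q)))"

definition gamma_converges :: "'p topology \<Rightarrow> (real \<Rightarrow> 'p \<Rightarrow> real) \<Rightarrow> ('p \<Rightarrow> real) \<Rightarrow> bool" where
  "gamma_converges T F F0 \<longleftrightarrow>
     (\<forall>p\<in>topspace T. gamma_liminf T F p = ereal (F0 p) \<and> gamma_limsup T F p = ereal (F0 p))"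

end

theory Submission
  imports Defs
begin


definition vmax :: "nat \<Rightarrow> (nat \<Rightarrow> real) \<Rightarrow> real" where
  "vmax K v = Max (v ` {..<K})"

definition second :: "nat \<Rightarrow> (nat \<Rightarrow> real) \<Rightarrow> real" where
  "second K v = Max ((\<lambda>(i,j). min (v i) (v j)) ` {(i,j). i<K \<and> j<K \<and> i\<noteq>j})"

lemma finite_offdiag: "finite {(i,j). i<K \<and> j<K \<and> i\<noteq>(j::nat)}"
  by (rule finite_subset[of _ "{..<K} \<times> {..<K}"]) auto

lemma two_elems:
  assumes "finite S" "card S \<ge> 2"
  obtains i j where "i \<in> S" "j \<in> S" "i \<noteq> j"
proof -
  have "S \<noteq> {}" using assms by auto
  then obtain i where i: "i \<in> S" by auto
  have "card (S - {i}) \<ge> 1" using assms i by (simp add: card_Diff_singleton)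
  then have "S - {i} \<noteq> {}" by (intro notI) simp
  then obtain j where "j \<in> S - {i}" by auto
  then show ?thesis using i that by auto
qed

lemma margin_eq:
  assumes K: "K \<ge> 2"
  shows "margin K v = vmax K v - second K v"
proof -
  define xs where "xs = map v [0..<K]"
  define l where "l = rev (sort xs)"
  have len: "length l = K" by (simp add: l_def xs_def)
  have mono: "l!j \<le> l!i" if "i \<le> j" "j < K" for i j
    using sorted_rev_nth_mono[of l i j] that len by (simp add: l_def)
  have setl: "set l = v ` {..<K}" by (auto simp: l_def xs_def)
  have lenf: "length (filter P l) = length (filter P xs)" for P
  proof -
    have "mset l = mset xs" by (simp add: l_def)
    then have "mset (filter P l) = mset (filter P xs)" by (simp add: mset_filter)
    then show ?thesis by (metis size_mset)
  qed
  have cnt: "card {i. i<K \<and> P (l!i)} = card {k. k<K \<and> P (v k)}" for P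
  proof -
    have "card {i. i<K \<and> P (l!i)} = length (filter P l)"
      by (simp add: length_filter_conv_card len)
    also have "\<dots> = length (filter P xs)" by (rule lenf)
    also have "\<dots> = card {i. i < length xs \<and> P (xs!i)}" by (rule length_filter_conv_card)
    also have "{i. i < length xs \<and> P (xs!i)} = {k. k<K \<and> P (v k)}"
      by (auto simp: xs_def)
    finally show ?thesis .
  qed
  have top: "vmax K v = l!0"
    unfolding vmax_def
  proof (rule Max_eqI)
    show "finite (v ` {..<K})" by simp
    have "0 < length l" using K len by simp
    then have "l!0 \<in> set l" by (rule nth_mem)
    then show "l!0 \<in> v ` {..<K}" using setl by simp
    fix y assume "y \<in> v ` {..<K}"
    then have "y \<in> set l" using setl by simp
    then obtain i where "i < K" "y = l!i" using len by (auto simp: in_set_conv_nth)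
    then show "y \<le> l!0" using mono by auto
  qed
  let ?S = "(\<lambda>(i,j). min (v i) (v j)) ` {(i,j). i<K \<and> j<K \<and> i\<noteq>j}"
  have up: "min (v i) (v j) \<le> l!1" if ij0: "i<K" "j<K" "i\<noteq>j" for i j
  proof (rule ccontr)
    assume nle: "\<not> min (v i) (v j) \<le> l!1"
    have sub: "{i, j} \<subseteq> {k. k<K \<and> l!1 < v k}" using ij0 nle by auto
    have fin: "finite {k. k<K \<and> l!1 < v k}" by simp
    have "card {i, j} \<le> card {k. k<K \<and> l!1 < v k}" by (rule card_mono[OF fin sub])
    moreover have "card {i, j} = 2" using ij0 by simp
    ultimately have c2: "2 \<le> card {k. k<K \<and> l!1 < v k}" by simp
    have sub2: "{i. i<K \<and> l!1 < l!i} \<subseteq> {0}"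
    proof
      fix i assume "i \<in> {i. i<K \<and> l!1 < l!i}"
      then have "i < K" "l!1 < l!i" by auto
      then show "i \<in> {0}" using mono[of 1 i] by (cases i) auto
    qed
    have "card {i. i<K \<and> l!1 < l!i} \<le> card {0::nat}" by (rule card_mono[OF _ sub2]) simp
    then have "card {i. i<K \<and> l!1 < l!i} \<le> 1" by simp
    then show False using c2 cnt[of "\<lambda>x. l!1 < x"] by simp
  qed
  have "{0, 1} \<subseteq> {i. i<K \<and> l!1 \<le> l!i}" using K mono[of 0 1] by auto
  then have "card {0::nat, 1} \<le> card {i. i<K \<and> l!1 \<le> l!i}" by (intro card_mono) auto
  then have "2 \<le> card {k. k<K \<and> l!1 \<le> v k}" using cnt[of "\<lambda>x. l!1 \<le> x"] by simp
  then obtain i j where ij: "i \<in> {k. k<K \<and> l!1 \<le> v k}" "j \<in> {k. k<K \<and> l!1 \<le> v k}" "i \<noteq> j"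
    by (rule two_elems[rotated]) auto
  have sec: "second K v = l!1"
    unfolding second_def
  proof (rule Max_eqI)
    show "finite ?S" using finite_offdiag by simp
    show "l!1 \<in> ?S"
    proof
      show "l!1 = (\<lambda>(i,j). min (v i) (v j)) (i, j)" using up[of i j] ij by auto
    qed (use ij in auto)
    fix y assume "y \<in> ?S"
    then show "y \<le> l!1" using up by auto
  qed
  show ?thesis unfolding margin_def Let_def using top sec by (simp add: l_def xs_def)
qed

lemma hw_props:
  assumes "K > 0"
  shows "hard_winner K v < K \<and> (\<forall>j<K. v j \<le> v (hard_winner K v))"
proof -
  have "Max (v ` {..<K}) \<in> v ` {..<K}" using assms by (intro Max_in) auto
  then obtain k where k: "k < K" "v k = Max (v ` {..<K})" by auto
  then have "k < K \<and> (\<forall>j<K. v j \<le> v k)" by auto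
  then show ?thesis unfolding hard_winner_def by (rule LeastI)
qed

lemma gap:
  assumes K: "K \<ge> 2" and j: "j < K" "j \<noteq> hard_winner K v"
  shows "v j \<le> v (hard_winner K v) - margin K v"
proof -
  let ?k = "hard_winner K v"
  have hw: "?k < K" "\<forall>j<K. v j \<le> v ?k" using hw_props[of K v] K by auto
  have "vmax K v = v ?k" unfolding vmax_def using hw by (intro Max_eqI) auto
  moreover have "min (v ?k) (v j) \<le> second K v" unfolding second_def
  proof (rule Max_ge)
    show "finite ((\<lambda>(i,j). min (v i) (v j)) ` {(i,j). i<K \<and> j<K \<and> i\<noteq>j})"
      using finite_offdiag by simp
    show "min (v ?k) (v j) \<in> (\<lambda>(i,j). min (v i) (v j)) ` {(i,j). i<K \<and> j<K \<and> i\<noteq>j}"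
      by (rule image_eqI[of _ _ "(?k,j)"]) (use hw j in auto)
  qed
  moreover have "min (v ?k) (v j) = v j" using hw j by auto
  ultimately show ?thesis using margin_eq[OF K, of v] by simp
qed

lemma hw_stable:
  assumes K: "K \<ge> 2" and close: "\<forall>k<K. \<bar>w k - v k\<bar> \<le> e" and m: "margin K v > 2 * e"
  shows "hard_winner K w = hard_winner K v"
proof -
  let ?k = "hard_winner K v"
  have hw: "?k < K" "\<forall>j<K. v j \<le> v ?k" using hw_props[of K v] K by auto
  have strict: "w j < w ?k" if "j < K" "j \<noteq> ?k" for j
  proof -
    have "v j \<le> v ?k - margin K v" using gap[OF K that] .
    moreover have "\<bar>w j - v j\<bar> \<le> e" "\<bar>w ?k - v ?k\<bar> \<le> e" using close that hw by auto
    ultimately show ?thesis using m by (simp add: abs_le_iff)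
  qed
  show ?thesis unfolding hard_winner_def[of K w]
  proof (rule Least_equality)
    show "?k < K \<and> (\<forall>j<K. w j \<le> w ?k)" using hw strict by (metis order.strict_implies_order order_refl)
    fix y assume "y < K \<and> (\<forall>j<K. w j \<le> w y)"
    then show "?k \<le> y" using strict hw by (metis not_less order_refl)
  qed
qed


lemma sm_nonneg: "softmax K v \<tau> k \<ge> 0"
  unfolding softmax_def by (intro divide_nonneg_nonneg sum_nonneg) auto

lemma sm_sum: assumes "K > 0" shows "(\<Sum>k<K. softmax K v \<tau> k) = 1"
proof -
  have pos: "(\<Sum>j<K. exp (v j / \<tau>)) > 0" using assms by (intro sum_pos) auto
  show ?thesis unfolding softmax_def using pos by (simp add: sum_divide_distrib[symmetric])
qed

lemma sm_bound:
  assumes "k < K" "\<tau> > 0"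
  shows "softmax K v \<tau> j \<le> exp ((v j - v k) / \<tau>)"
proof -
  have le: "exp (v k / \<tau>) \<le> (\<Sum>i<K. exp (v i / \<tau>))"
    using assms by (intro member_le_sum) auto
  have pos: "(\<Sum>i<K. exp (v i / \<tau>)) * exp (v k / \<tau>) > 0"
    using assms by (intro mult_pos_pos sum_pos) auto
  have "softmax K v \<tau> j \<le> exp (v j / \<tau>) / exp (v k / \<tau>)"
    unfolding softmax_def using le pos by (intro divide_left_mono) auto
  also have "\<dots> = exp ((v j - v k) / \<tau>)" by (simp add: diff_divide_distrib exp_diff)
  finally show ?thesis .
qed

lemma soft_abs_le:
  assumes K: "K > 0" and B: "\<forall>k<K. \<bar>F k\<bar> \<le> B"
  shows "\<bar>\<Sum>k<K. softmax K v \<tau> k * F k\<bar> \<le> B"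
proof -
  have "\<bar>\<Sum>k<K. softmax K v \<tau> k * F k\<bar> \<le> (\<Sum>k<K. \<bar>softmax K v \<tau> k * F k\<bar>)" by (rule sum_abs)
  also have "\<dots> \<le> (\<Sum>k<K. softmax K v \<tau> k * B)"
    using B sm_nonneg by (intro sum_mono) (simp add: abs_mult mult_left_mono)
  also have "\<dots> = B" using sm_sum[OF K] by (simp add: sum_distrib_right[symmetric])
  finally show ?thesis .
qed

lemma soft_hard_pt:
  assumes K: "K \<ge> 2" and tau: "\<tau> > 0" and t: "t > 0" and B: "\<forall>k<K. \<bar>F k\<bar> \<le> B"
  shows "\<bar>F (hard_winner K v) - (\<Sum>k<K. softmax K v \<tau> k * F k)\<bar>
    \<le> 2 * B * indicator {w. margin K w \<le> t} v + 2 * B * K * exp (- t / \<tau>)"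
proof -
  let ?k = "hard_winner K v"
  let ?w = "softmax K v \<tau>"
  have K0: "K > 0" using K by simp
  have hw: "?k < K" "\<forall>j<K. v j \<le> v ?k" using hw_props[OF K0] by auto
  have B0: "B \<ge> 0" using B K0 by (meson abs_ge_zero order_trans)
  have "F ?k - (\<Sum>k<K. ?w k * F k) = (\<Sum>k<K. ?w k * (F ?k - F k))"
    using sm_sum[OF K0, of v \<tau>]
    by (simp add: right_diff_distrib sum_subtractf sum_distrib_right[symmetric])
  then have "\<bar>F ?k - (\<Sum>k<K. ?w k * F k)\<bar> \<le> (\<Sum>k<K. ?w k * \<bar>F ?k - F k\<bar>)"
    using sm_nonneg by (metis (no_types, lifting) abs_mult abs_of_nonneg sum.cong sum_abs)
  also have "\<dots> \<le> 2 * B * indicator {w. margin K w \<le> t} v + 2 * B * K * exp (- t / \<tau>)"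
  proof (cases "margin K v \<le> t")
    case True
    have "(\<Sum>k<K. ?w k * \<bar>F ?k - F k\<bar>) \<le> (\<Sum>k<K. ?w k * (2 * B))"
    proof (intro sum_mono mult_left_mono sm_nonneg)
      fix k assume "k \<in> {..<K}"
      then show "\<bar>F ?k - F k\<bar> \<le> 2 * B" using B hw by (smt (verit) lessThan_iff)
    qed
    also have "\<dots> = 2 * B" using sm_sum[OF K0] by (simp add: sum_distrib_right[symmetric])
    finally have "(\<Sum>k<K. ?w k * \<bar>F ?k - F k\<bar>) \<le> 2 * B" .
    moreover have "0 \<le> 2 * B * K * exp (- t / \<tau>)" using B0 by simp
    ultimately show ?thesis using True by simp
  next
    case False
    have "(\<Sum>k<K. ?w k * \<bar>F ?k - F k\<bar>) \<le> (\<Sum>k<K. exp (- t / \<tau>) * (2 * B))"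
    proof (intro sum_mono)
      fix k assume k: "k \<in> {..<K}"
      show "?w k * \<bar>F ?k - F k\<bar> \<le> exp (- t / \<tau>) * (2 * B)"
      proof (cases "k = ?k")
        case True then show ?thesis using B0 by simp
      next
        case ne: False
        have "?w k \<le> exp ((v k - v ?k) / \<tau>)" using sm_bound[OF hw(1) tau] .
        also have "\<dots> \<le> exp (- t / \<tau>)"
        proof -
          have "v k \<le> v ?k - margin K v" using gap[OF K _ ne] k by simp
          then have "v k - v ?k \<le> - t" using False by simp
          then have "(v k - v ?k) / \<tau> \<le> (- t) / \<tau>" using tau by (intro divide_right_mono) auto
          then show ?thesis by simp
        qed
        finally have w: "?w k \<le> exp (- t / \<tau>)" .
        have "\<bar>F ?k - F k\<bar> \<le> 2 * B" using B hw k by (smt (verit) lessThan_iff)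
        then show ?thesis using w sm_nonneg[of K v \<tau> k] by (intro mult_mono) auto
      qed
    qed
    also have "\<dots> = 2 * B * K * exp (- t / \<tau>)" by simp
    finally show ?thesis using False by simp
  qed
  finally show ?thesis .
qed

lemma abs_le_sq: fixes x d :: real assumes "d > 0" shows "\<bar>x::real\<bar> \<le> d + x\<^sup>2 / d"
proof -
  have "0 \<le> (\<bar>x\<bar> - d)\<^sup>2" by simp
  also have "(\<bar>x\<bar> - d)\<^sup>2 = x\<^sup>2 - 2 * (\<bar>x\<bar> * d) + d * d"
    by (simp add: power2_eq_square algebra_simps)
  finally have a: "2 * (\<bar>x\<bar> * d) \<le> x\<^sup>2 + d * d" by simp
  have "0 \<le> \<bar>x\<bar> * d" using assms by simp
  then have "\<bar>x\<bar> * d \<le> d * d + x\<^sup>2" using a by linarith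
  then show ?thesis using assms by (simp add: field_simps power2_eq_square)
qed

lemma exp_neg_le: fixes x :: real assumes "x > 0" shows "exp (- x) \<le> 1 / x"
proof -
  have "x \<le> exp x" using exp_ge_add_one_self[of x] by linarith
  then show ?thesis using assms by (simp add: exp_minus field_simps)
qed

lemma sq_bound:
  fixes y u BY B :: real
  assumes "\<bar>y\<bar> \<le> BY" "\<bar>u\<bar> \<le> B"
  shows "norm ((y - u)\<^sup>2) \<le> (BY + B)\<^sup>2"
proof -
  have "\<bar>y - u\<bar> \<le> \<bar>y\<bar> + \<bar>u\<bar>" by (rule abs_triangle_ineq4)
  then have h: "\<bar>y - u\<bar> \<le> BY + B" using assms by linarith
  have "\<bar>y - u\<bar>\<^sup>2 \<le> (BY + B)\<^sup>2" by (rule power_mono[OF h]) simp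
  then show ?thesis by simp
qed

lemma risk_diff:
  fixes u v Y :: "'a \<Rightarrow> real"
  assumes M: "prob_space M"
    and u: "u \<in> borel_measurable M" and v: "v \<in> borel_measurable M" and Y: "Y \<in> borel_measurable M"
    and AY: "AE \<omega> in M. \<bar>Y \<omega>\<bar> \<le> BY"
    and bu: "\<forall>\<omega>\<in>space M. \<bar>u \<omega>\<bar> \<le> B" and bv: "\<forall>\<omega>\<in>space M. \<bar>v \<omega>\<bar> \<le> B"
  shows "\<bar>(\<integral>\<omega>. (Y \<omega> - u \<omega>)\<^sup>2 \<partial>M) - (\<integral>\<omega>. (Y \<omega> - v \<omega>)\<^sup>2 \<partial>M)\<bar>
     \<le> 2 * (BY + B) * (\<integral>\<omega>. \<bar>u \<omega> - v \<omega>\<bar> \<partial>M)"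
    and "integrable M (\<lambda>\<omega>. \<bar>u \<omega> - v \<omega>\<bar>)"
proof -
  interpret prob_space M by (rule M)
  have mu: "(\<lambda>\<omega>. (Y \<omega> - u \<omega>)\<^sup>2) \<in> borel_measurable M"
    by (intro borel_measurable_power borel_measurable_diff u Y)
  have mv: "(\<lambda>\<omega>. (Y \<omega> - v \<omega>)\<^sup>2) \<in> borel_measurable M"
    by (intro borel_measurable_power borel_measurable_diff v Y)
  have muv: "(\<lambda>\<omega>. \<bar>u \<omega> - v \<omega>\<bar>) \<in> borel_measurable M"
    by (intro borel_measurable_abs borel_measurable_diff u v)
  have iu: "integrable M (\<lambda>\<omega>. (Y \<omega> - u \<omega>)\<^sup>2)"
  proof (rule integrable_const_bound[where B="(BY + B)\<^sup>2", OF _ mu])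
    show "AE x in M. norm ((Y x - u x)\<^sup>2) \<le> (BY + B)\<^sup>2"
      using AY
    proof (rule AE_mp, intro AE_I2 impI)
      fix x assume "x \<in> space M" "\<bar>Y x\<bar> \<le> BY"
      then show "norm ((Y x - u x)\<^sup>2) \<le> (BY + B)\<^sup>2" using bu by (intro sq_bound) auto
    qed
  qed
  have iv: "integrable M (\<lambda>\<omega>. (Y \<omega> - v \<omega>)\<^sup>2)"
  proof (rule integrable_const_bound[where B="(BY + B)\<^sup>2", OF _ mv])
    show "AE x in M. norm ((Y x - v x)\<^sup>2) \<le> (BY + B)\<^sup>2"
      using AY
    proof (rule AE_mp, intro AE_I2 impI)
      fix x assume "x \<in> space M" "\<bar>Y x\<bar> \<le> BY"
      then show "norm ((Y x - v x)\<^sup>2) \<le> (BY + B)\<^sup>2" using bv by (intro sq_bound) auto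
    qed
  qed
  show iuv: "integrable M (\<lambda>\<omega>. \<bar>u \<omega> - v \<omega>\<bar>)"
  proof (rule integrable_const_bound[where B="B + B", OF _ muv])
    show "AE x in M. norm (\<bar>u x - v x\<bar>) \<le> B + B"
    proof (rule AE_I2)
      fix x assume x: "x \<in> space M"
      have "\<bar>u x - v x\<bar> \<le> \<bar>u x\<bar> + \<bar>v x\<bar>" by (rule abs_triangle_ineq4)
      moreover have "\<bar>u x\<bar> \<le> B" "\<bar>v x\<bar> \<le> B" using bu bv x by auto
      ultimately show "norm (\<bar>u x - v x\<bar>) \<le> B + B" by simp
    qed
  qed
  have "\<bar>(\<integral>\<omega>. (Y \<omega> - u \<omega>)\<^sup>2 \<partial>M) - (\<integral>\<omega>. (Y \<omega> - v \<omega>)\<^sup>2 \<partial>M)\<bar>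
      = \<bar>\<integral>\<omega>. (Y \<omega> - u \<omega>)\<^sup>2 - (Y \<omega> - v \<omega>)\<^sup>2 \<partial>M\<bar>"
    by (subst Bochner_Integration.integral_diff[OF iu iv]) (rule refl)
  also have "\<dots> \<le> (\<integral>\<omega>. \<bar>(Y \<omega> - u \<omega>)\<^sup>2 - (Y \<omega> - v \<omega>)\<^sup>2\<bar> \<partial>M)"
    by (rule integral_abs_bound)
  also have "\<dots> \<le> (\<integral>\<omega>. 2 * (BY + B) * \<bar>u \<omega> - v \<omega>\<bar> \<partial>M)"
  proof (rule integral_mono_AE)
    show "integrable M (\<lambda>\<omega>. \<bar>(Y \<omega> - u \<omega>)\<^sup>2 - (Y \<omega> - v \<omega>)\<^sup>2\<bar>)"
      by (intro integrable_abs Bochner_Integration.integrable_diff iu iv)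
    show "integrable M (\<lambda>\<omega>. 2 * (BY + B) * \<bar>u \<omega> - v \<omega>\<bar>)"
      by (intro integrable_mult_right iuv)
    show "AE \<omega> in M. \<bar>(Y \<omega> - u \<omega>)\<^sup>2 - (Y \<omega> - v \<omega>)\<^sup>2\<bar> \<le> 2 * (BY + B) * \<bar>u \<omega> - v \<omega>\<bar>"
      using AY
    proof (rule AE_mp, intro AE_I2 impI)
      fix x assume x: "x \<in> space M" and yb: "\<bar>Y x\<bar> \<le> BY"
      have eq: "(Y x - u x)\<^sup>2 - (Y x - v x)\<^sup>2 = (v x - u x) * (2 * Y x - u x - v x)"
        by (simp add: power2_eq_square algebra_simps)
      have "\<bar>2 * Y x - u x - v x\<bar> \<le> \<bar>2 * Y x\<bar> + \<bar>u x\<bar> + \<bar>v x\<bar>" by linarith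
      also have "\<dots> \<le> 2 * BY + B + B" using yb bu bv x by (simp add: abs_mult) (smt (verit))
      finally have "\<bar>2 * Y x - u x - v x\<bar> \<le> 2 * (BY + B)" by simp
      then have "\<bar>v x - u x\<bar> * \<bar>2 * Y x - u x - v x\<bar> \<le> \<bar>v x - u x\<bar> * (2 * (BY + B))"
        by (intro mult_left_mono) auto
      then show "\<bar>(Y x - u x)\<^sup>2 - (Y x - v x)\<^sup>2\<bar> \<le> 2 * (BY + B) * \<bar>u x - v x\<bar>"
        unfolding eq abs_mult by (simp add: abs_minus_commute mult.commute)
    qed
  qed
  also have "\<dots> = 2 * (BY + B) * (\<integral>\<omega>. \<bar>u \<omega> - v \<omega>\<bar> \<partial>M)" by (rule integral_mult_right_zero)
  finally show "\<bar>(\<integral>\<omega>. (Y \<omega> - u \<omega>)\<^sup>2 \<partial>M) - (\<integral>\<omega>. (Y \<omega> - v \<omega>)\<^sup>2 \<partial>M)\<bar>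
     \<le> 2 * (BY + B) * (\<integral>\<omega>. \<bar>u \<omega> - v \<omega>\<bar> \<partial>M)" .
qed


lemma meas_hw:
  fixes A :: "'w \<Rightarrow> nat \<Rightarrow> real"
  assumes A: "\<And>k. k < K \<Longrightarrow> (\<lambda>\<omega>. A \<omega> k) \<in> borel_measurable M"
  shows "(\<lambda>\<omega>. hard_winner K (A \<omega>)) \<in> measurable M (count_space UNIV)"
  unfolding hard_winner_def
proof (rule measurable_Least)
  fix k
  show "(\<lambda>\<omega>. k < K \<and> (\<forall>j<K. A \<omega> j \<le> A \<omega> k)) \<in> measurable M (count_space UNIV)"
  proof (cases "k < K")
    case True
    have p: "Measurable.pred M (\<lambda>\<omega>. \<forall>j\<in>{..<K}. A \<omega> j \<le> A \<omega> k)"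
    proof (rule pred_intros_finite(3))
      fix j assume "j \<in> {..<K}"
      then have "(\<lambda>\<omega>. A \<omega> j) \<in> borel_measurable M" "(\<lambda>\<omega>. A \<omega> k) \<in> borel_measurable M"
        using A True by auto
      then show "Measurable.pred M (\<lambda>\<omega>. A \<omega> j \<le> A \<omega> k)"
        unfolding pred_def by (rule borel_measurable_le)
    qed simp
    have eq: "(\<lambda>\<omega>. k < K \<and> (\<forall>j<K. A \<omega> j \<le> A \<omega> k)) = (\<lambda>\<omega>. \<forall>j\<in>{..<K}. A \<omega> j \<le> A \<omega> k)"
      using True by auto
    show ?thesis by (subst eq) (rule p)
  next
    case False
    then show ?thesis by simp
  qed
qed

lemma meas_hard:
  fixes A :: "'w \<Rightarrow> nat \<Rightarrow> real" and G :: "nat \<Rightarrow> 'w \<Rightarrow> real"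
  assumes K: "K > 0"
    and A: "\<And>k. k < K \<Longrightarrow> (\<lambda>\<omega>. A \<omega> k) \<in> borel_measurable M"
    and G: "\<And>k. k < K \<Longrightarrow> G k \<in> borel_measurable M"
  shows "(\<lambda>\<omega>. G (hard_winner K (A \<omega>)) \<omega>) \<in> borel_measurable M"
proof -
  define G' where "G' k = (if k < K then G k else (\<lambda>_. 0))" for k
  have "(\<lambda>\<omega>. G' (hard_winner K (A \<omega>)) \<omega>) \<in> borel_measurable M"
    by (rule measurable_compose_countable[OF _ meas_hw[OF A]]) (auto simp: G'_def G)
  moreover have "G' (hard_winner K (A \<omega>)) \<omega> = G (hard_winner K (A \<omega>)) \<omega>" for \<omega>
    using hw_props[OF K, of "A \<omega>"] by (simp add: G'_def)
  ultimately show ?thesis by simp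
qed

lemma meas_margin:
  fixes A :: "'w \<Rightarrow> nat \<Rightarrow> real"
  assumes K: "K \<ge> 2"
    and A: "\<And>k. k < K \<Longrightarrow> (\<lambda>\<omega>. A \<omega> k) \<in> borel_measurable M"
  shows "(\<lambda>\<omega>. margin K (A \<omega>)) \<in> borel_measurable M"
proof -
  have m1: "(\<lambda>\<omega>. vmax K (A \<omega>)) \<in> borel_measurable M"
    unfolding vmax_def by (rule borel_measurable_Max) (use A in auto)
  have m2: "(\<lambda>\<omega>. Max ((\<lambda>ij. min (A \<omega> (fst ij)) (A \<omega> (snd ij))) ` {(i,j). i<K \<and> j<K \<and> i\<noteq>j}))
      \<in> borel_measurable M"
    by (rule borel_measurable_Max[OF finite_offdiag])
       (auto intro!: borel_measurable_min A)
  have "(\<lambda>(i,j). min (v i) (v j)) = (\<lambda>ij. min (v (fst ij)) (v (snd ij)))" for v :: "nat \<Rightarrow> real"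
    by auto
  then have m2': "(\<lambda>\<omega>. second K (A \<omega>)) \<in> borel_measurable M"
    using m2 unfolding second_def by simp
  show ?thesis unfolding margin_eq[OF K] using m1 m2' by (rule borel_measurable_diff)
qed

lemma meas_soft:
  fixes A :: "'w \<Rightarrow> nat \<Rightarrow> real" and G :: "nat \<Rightarrow> 'w \<Rightarrow> real"
  assumes A: "\<And>k. k < K \<Longrightarrow> (\<lambda>\<omega>. A \<omega> k) \<in> borel_measurable M"
    and G: "\<And>k. k < K \<Longrightarrow> G k \<in> borel_measurable M"
  shows "(\<lambda>\<omega>. \<Sum>k<K. softmax K (A \<omega>) \<tau> k * G k \<omega>) \<in> borel_measurable M"
proof -
  have e: "(\<lambda>x. exp (A x k / \<tau>)) \<in> borel_measurable M" if k: "k < K" for k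
    by (rule measurable_compose[OF borel_measurable_divide[OF A[OF k] borel_measurable_const] borel_measurable_exp])
  have d: "(\<lambda>x. \<Sum>j<K. exp (A x j / \<tau>)) \<in> borel_measurable M"
    by (rule borel_measurable_sum) (use e in auto)
  have t: "(\<lambda>x. exp (A x k / \<tau>) / (\<Sum>j<K. exp (A x j / \<tau>)) * G k x) \<in> borel_measurable M"
    if k: "k < K" for k
    by (rule borel_measurable_times[OF borel_measurable_divide[OF e[OF k] d] G[OF k]])
  show ?thesis unfolding softmax_def by (rule borel_measurable_sum) (use t in auto)
qed


lemma p_facts:
  fixes M :: "'w measure" and X :: "'w \<Rightarrow> real ^ 'd" and f :: "nat \<Rightarrow> 't \<Rightarrow> real ^ 'd \<Rightarrow> real"
    and a :: "'f \<Rightarrow> real ^ 'd \<Rightarrow> nat \<Rightarrow> real" and T :: "((nat \<Rightarrow> 't) \<times> 'f) topology"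
  assumes Xmeas: "X \<in> M \<rightarrow>\<^sub>M borel"
    and XinX: "\<forall>\<omega>\<in>space M. X \<omega> \<in> Xset"
    and f_L2: "\<forall>k<K. \<forall>t\<in>Theta k. in_L2 (distr M borel X) (f k t)"
    and a_L2: "\<forall>\<phi>\<in>Phi. \<forall>k<K. in_L2 (distr M borel X) (\<lambda>x. a \<phi> x k)"
    and fb: "\<forall>k<K. \<forall>x\<in>Xset. \<forall>t\<in>Theta k. \<bar>f k t x\<bar> \<le> B_f"
    and topspace_T: "topspace T = (PiE {..<K} Theta) \<times> Phi"
    and p: "p \<in> topspace T"
  shows "\<And>k. k < K \<Longrightarrow> (\<lambda>\<omega>. f k (fst p k) (X \<omega>)) \<in> borel_measurable M"
    and "\<And>k. k < K \<Longrightarrow> (\<lambda>\<omega>. a (snd p) (X \<omega>) k) \<in> borel_measurable M"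
    and "\<And>k \<omega>. k < K \<Longrightarrow> \<omega> \<in> space M \<Longrightarrow> \<bar>f k (fst p k) (X \<omega>)\<bar> \<le> B_f"
    and "snd p \<in> Phi"
    and "\<And>k. k < K \<Longrightarrow> fst p k \<in> Theta k"
proof -
  have pp: "fst p \<in> PiE {..<K} Theta" "snd p \<in> Phi" using p topspace_T by (auto simp: mem_Times_iff)
  show th: "fst p k \<in> Theta k" if "k < K" for k using PiE_mem[OF pp(1)] that by simp
  show "snd p \<in> Phi" by (rule pp(2))
  show "(\<lambda>\<omega>. f k (fst p k) (X \<omega>)) \<in> borel_measurable M" if k: "k < K" for k
  proof -
    have "f k (fst p k) \<in> borel_measurable borel" using f_L2 k th[OF k] by (auto simp: in_L2_def)
    then show ?thesis by (rule measurable_compose[OF Xmeas])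
  qed
  show "(\<lambda>\<omega>. a (snd p) (X \<omega>) k) \<in> borel_measurable M" if k: "k < K" for k
  proof -
    have "(\<lambda>x. a (snd p) x k) \<in> borel_measurable borel" using a_L2 k pp(2) by (auto simp: in_L2_def)
    then show ?thesis by (rule measurable_compose[OF Xmeas])
  qed
  show "\<bar>f k (fst p k) (X \<omega>)\<bar> \<le> B_f" if "k < K" "\<omega> \<in> space M" for k \<omega>
    using fb XinX th that by auto
qed

lemma unif_bound:
  fixes M :: "'w measure" and X :: "'w \<Rightarrow> real ^ 'd" and f :: "nat \<Rightarrow> 't \<Rightarrow> real ^ 'd \<Rightarrow> real"
    and a :: "'f \<Rightarrow> real ^ 'd \<Rightarrow> nat \<Rightarrow> real" and T :: "((nat \<Rightarrow> 't) \<times> 'f) topology"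
  assumes M: "prob_space M"
    and K2: "K \<ge> 2"
    and Xmeas: "X \<in> M \<rightarrow>\<^sub>M borel"
    and XinX: "\<forall>\<omega>\<in>space M. X \<omega> \<in> Xset"
    and Ymeas: "Y \<in> borel_measurable M"
    and f_L2: "\<forall>k<K. \<forall>t\<in>Theta k. in_L2 (distr M borel X) (f k t)"
    and a_L2: "\<forall>\<phi>\<in>Phi. \<forall>k<K. in_L2 (distr M borel X) (\<lambda>x. a \<phi> x k)"
    and mc: "\<forall>\<phi>\<in>Phi. \<forall>t>0. measure M {\<omega>\<in>space M. margin K (a \<phi> (X \<omega>)) \<le> t} \<le> C_mt * t powr \<alpha>"
    and Yb: "AE \<omega> in M. \<bar>Y \<omega>\<bar> \<le> B_Y"
    and fb: "\<forall>k<K. \<forall>x\<in>Xset. \<forall>t\<in>Theta k. \<bar>f k t x\<bar> \<le> B_f"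
    and Bf: "B_f > 0" and BY: "B_Y > 0"
    and topspace_T: "topspace T = (PiE {..<K} Theta) \<times> Phi"
    and p: "p \<in> topspace T"
    and tau: "\<tau> > 0" and t: "t > 0"
  shows "\<bar>soft_risk M X Y K f a \<tau> p - hard_risk M X Y K f a p\<bar>
     \<le> 2 * (B_Y + B_f) * (2 * B_f * (C_mt * t powr \<alpha>) + 2 * B_f * K * exp (- t / \<tau>))"
proof -
  interpret prob_space M by (rule M)
  note pf = p_facts[OF Xmeas XinX f_L2 a_L2 fb topspace_T p]
  have K0: "K > 0" using K2 by simp
  define A where "A \<omega> = a (snd p) (X \<omega>)" for \<omega>
  define G where "G k \<omega> = f k (fst p k) (X \<omega>)" for k \<omega>
  define h where "h \<omega> = G (hard_winner K (A \<omega>)) \<omega>" for \<omega>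
  define s where "s \<omega> = (\<Sum>k<K. softmax K (A \<omega>) \<tau> k * G k \<omega>)" for \<omega>
  have Am: "(\<lambda>\<omega>. A \<omega> k) \<in> borel_measurable M" if "k < K" for k
    unfolding A_def using pf(2)[OF that] .
  have Gm: "G k \<in> borel_measurable M" if "k < K" for k
    unfolding G_def using pf(1)[OF that] .
  have Gb: "\<bar>G k \<omega>\<bar> \<le> B_f" if "k < K" "\<omega> \<in> space M" for k \<omega>
    unfolding G_def using pf(3)[OF that] .
  have hm: "h \<in> borel_measurable M" unfolding h_def by (rule meas_hard[OF K0 Am Gm])
  have sm: "s \<in> borel_measurable M" unfolding s_def by (rule meas_soft[OF Am Gm])
  have hb: "\<forall>\<omega>\<in>space M. \<bar>h \<omega>\<bar> \<le> B_f"
    unfolding h_def using Gb hw_props[OF K0] by blast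
  have sb: "\<forall>\<omega>\<in>space M. \<bar>s \<omega>\<bar> \<le> B_f"
    unfolding s_def using Gb by (auto intro!: soft_abs_le[OF K0])
  have sr: "soft_risk M X Y K f a \<tau> p = (\<integral>\<omega>. (Y \<omega> - s \<omega>)\<^sup>2 \<partial>M)"
    by (simp add: soft_risk_def soft_pred_def s_def A_def G_def)
  have hr: "hard_risk M X Y K f a p = (\<integral>\<omega>. (Y \<omega> - h \<omega>)\<^sup>2 \<partial>M)"
    by (simp add: hard_risk_def hard_pred_def Let_def h_def A_def G_def)
  note rd = risk_diff[OF M sm hm Ymeas Yb sb hb]
  define S where "S = {\<omega>\<in>space M. margin K (A \<omega>) \<le> t}"
  have Ss: "S \<in> sets M" unfolding S_def
    by (rule borel_measurable_le[OF meas_margin[OF K2 Am] borel_measurable_const])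
  have Smeas: "measure M S \<le> C_mt * t powr \<alpha>"
    using mc pf(4) t unfolding S_def A_def by auto
  let ?c = "2 * B_f * K * exp (- t / \<tau>)"
  have "(\<integral>\<omega>. \<bar>s \<omega> - h \<omega>\<bar> \<partial>M) \<le> (\<integral>\<omega>. 2 * B_f * indicator S \<omega> + ?c \<partial>M)"
  proof (rule integral_mono)
    show "integrable M (\<lambda>\<omega>. \<bar>s \<omega> - h \<omega>\<bar>)" by (rule rd(2))
    show "integrable M (\<lambda>\<omega>. 2 * B_f * indicator S \<omega> + ?c)"
      using Ss by (intro Bochner_Integration.integrable_add integrable_mult_right integrable_real_indicator) (auto simp: emeasure_eq_measure)
    fix \<omega> assume w: "\<omega> \<in> space M"
    have "\<bar>h \<omega> - s \<omega>\<bar> \<le> 2 * B_f * indicator {w. margin K w \<le> t} (A \<omega>) + ?c"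
      unfolding h_def s_def using Gb w by (intro soft_hard_pt[OF K2 tau t]) auto
    also have "indicator {w. margin K w \<le> t} (A \<omega>) = (indicator S \<omega> :: real)"
      using w by (simp add: S_def indicator_def)
    finally show "\<bar>s \<omega> - h \<omega>\<bar> \<le> 2 * B_f * indicator S \<omega> + ?c" by (simp add: abs_minus_commute)
  qed
  also have "\<dots> = 2 * B_f * measure M S + ?c"
    using Ss by (subst Bochner_Integration.integral_add) (auto simp: prob_space emeasure_eq_measure)
  also have "\<dots> \<le> 2 * B_f * (C_mt * t powr \<alpha>) + ?c"
    using Smeas Bf by simp
  finally have I: "(\<integral>\<omega>. \<bar>s \<omega> - h \<omega>\<bar> \<partial>M) \<le> 2 * B_f * (C_mt * t powr \<alpha>) + ?c" .
  have "\<bar>soft_risk M X Y K f a \<tau> p - hard_risk M X Y K f a p\<bar> \<le> 2 * (B_Y + B_f) * (\<integral>\<omega>. \<bar>s \<omega> - h \<omega>\<bar> \<partial>M)"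
    unfolding sr hr by (rule rd(1))
  also have "\<dots> \<le> 2 * (B_Y + B_f) * (2 * B_f * (C_mt * t powr \<alpha>) + ?c)"
    using I Bf BY by (intro mult_left_mono) auto
  finally show ?thesis .
qed


lemma choose_t:
  fixes Cst C \<alpha> e :: real
  assumes "Cst > 0" "C > 0" "\<alpha> > 0" "e > 0"
  shows "\<exists>t>0. Cst * (C * t powr \<alpha>) \<le> e"
proof -
  define t where "t = (e / (Cst * C)) powr (1 / \<alpha>)"
  have pos: "e / (Cst * C) > 0" using assms by simp
  have t0: "t > 0" unfolding t_def using pos by (simp only: powr_gt_zero)
  have one: "(1 / \<alpha>) * \<alpha> = 1" using assms by simp
  have "t powr \<alpha> = (e / (Cst * C)) powr ((1 / \<alpha>) * \<alpha>)" unfolding t_def by (rule powr_powr)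
  also have "\<dots> = e / (Cst * C)" unfolding one using pos by (intro powr_one) simp
  finally have tp: "t powr \<alpha> = e / (Cst * C)" .
  have "Cst * (C * t powr \<alpha>) = e" unfolding tp using assms by (simp add: field_simps)
  then show ?thesis using t0 by auto
qed

lemma choose_delta:
  fixes Cst C \<alpha> e KK :: real
  assumes "Cst > 0" "C > 0" "\<alpha> > 0" "e > 0" "KK > 0"
  shows "\<exists>t>0. \<exists>\<delta>>0. \<forall>\<tau>. 0 < \<tau> \<and> \<tau> < \<delta> \<longrightarrow> Cst * (C * t powr \<alpha>) + Cst * KK * (\<tau> / t) \<le> e"
proof -
  obtain t where t: "t > 0" "Cst * (C * t powr \<alpha>) \<le> e / 2"
    using choose_t[of Cst C \<alpha> "e/2"] assms by auto
  define \<delta> where "\<delta> = e * t / (2 * Cst * KK)"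
  have d0: "\<delta> > 0" unfolding \<delta>_def using assms t by simp
  have *: "Cst * KK * (\<tau> / t) \<le> e / 2" if "0 < \<tau>" "\<tau> < \<delta>" for \<tau>
  proof -
    have "Cst * KK * (\<tau> / t) \<le> Cst * KK * (\<delta> / t)"
      using that t assms by (intro mult_left_mono divide_right_mono) auto
    also have "\<dots> = e / 2" unfolding \<delta>_def using assms t by (simp add: field_simps)
    finally show ?thesis .
  qed
  have "\<forall>\<tau>. 0 < \<tau> \<and> \<tau> < \<delta> \<longrightarrow> Cst * (C * t powr \<alpha>) + Cst * KK * (\<tau> / t) \<le> e"
  proof (intro allI impI)
    fix \<tau> assume "0 < \<tau> \<and> \<tau> < \<delta>"
    then have "Cst * KK * (\<tau> / t) \<le> e / 2" using * by blast
    then show "Cst * (C * t powr \<alpha>) + Cst * KK * (\<tau> / t) \<le> e" using t(2) by linarith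
  qed
  then show ?thesis using t(1) d0 by blast
qed


lemma bdd_integrable:
  fixes g :: "'a \<Rightarrow> real"
  assumes "prob_space M" "g \<in> borel_measurable M" "\<forall>\<omega>\<in>space M. \<bar>g \<omega>\<bar> \<le> B"
  shows "integrable M g"
proof -
  interpret prob_space M by fact
  show ?thesis by (rule integrable_const_bound[where B=B]) (use assms in \<open>auto intro!: AE_I2\<close>)
qed

lemma unif:
  fixes M :: "'w measure" and X :: "'w \<Rightarrow> real ^ 'd" and f :: "nat \<Rightarrow> 't \<Rightarrow> real ^ 'd \<Rightarrow> real"
    and a :: "'f \<Rightarrow> real ^ 'd \<Rightarrow> nat \<Rightarrow> real" and T :: "((nat \<Rightarrow> 't) \<times> 'f) topology"
  assumes M: "prob_space M"
    and K2: "K \<ge> 2"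
    and Xmeas: "X \<in> M \<rightarrow>\<^sub>M borel"
    and XinX: "\<forall>\<omega>\<in>space M. X \<omega> \<in> Xset"
    and Ymeas: "Y \<in> borel_measurable M"
    and f_L2: "\<forall>k<K. \<forall>t\<in>Theta k. in_L2 (distr M borel X) (f k t)"
    and a_L2: "\<forall>\<phi>\<in>Phi. \<forall>k<K. in_L2 (distr M borel X) (\<lambda>x. a \<phi> x k)"
    and C0: "C_mt > 0" and al: "\<alpha> > 0"
    and mc: "\<forall>\<phi>\<in>Phi. \<forall>t>0. measure M {\<omega>\<in>space M. margin K (a \<phi> (X \<omega>)) \<le> t} \<le> C_mt * t powr \<alpha>"
    and Yb: "AE \<omega> in M. \<bar>Y \<omega>\<bar> \<le> B_Y"
    and fb: "\<forall>k<K. \<forall>x\<in>Xset. \<forall>t\<in>Theta k. \<bar>f k t x\<bar> \<le> B_f"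
    and Bf: "B_f > 0" and BY: "B_Y > 0"
    and topspace_T: "topspace T = (PiE {..<K} Theta) \<times> Phi"
    and e: "e > 0"
  shows "\<exists>\<delta>>0. \<forall>\<tau>. 0 < \<tau> \<and> \<tau> < \<delta> \<longrightarrow>
     (\<forall>q\<in>topspace T. \<bar>soft_risk M X Y K f a \<tau> q - hard_risk M X Y K f a q\<bar> \<le> e)"
proof -
  define Cst where "Cst = 4 * B_f * (B_Y + B_f)"
  have Cst0: "Cst > 0" unfolding Cst_def using Bf BY by simp
  have K0: "real K > 0" using K2 by simp
  obtain t \<delta> where t: "t > 0" and d: "\<delta> > 0"
    and td: "\<forall>\<tau>. 0 < \<tau> \<and> \<tau> < \<delta> \<longrightarrow> Cst * (C_mt * t powr \<alpha>) + Cst * real K * (\<tau> / t) \<le> e"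
    using choose_delta[OF Cst0 C0 al e K0] by blast
  have "\<forall>q\<in>topspace T. \<bar>soft_risk M X Y K f a \<tau> q - hard_risk M X Y K f a q\<bar> \<le> e"
    if tau: "0 < \<tau>" "\<tau> < \<delta>" for \<tau>
  proof
    fix q assume q: "q \<in> topspace T"
    have "\<bar>soft_risk M X Y K f a \<tau> q - hard_risk M X Y K f a q\<bar>
       \<le> 2 * (B_Y + B_f) * (2 * B_f * (C_mt * t powr \<alpha>) + 2 * B_f * K * exp (- t / \<tau>))"
      by (rule unif_bound[OF M K2 Xmeas XinX Ymeas f_L2 a_L2 mc Yb fb Bf BY topspace_T q tau(1) t])
    also have "\<dots> = Cst * (C_mt * t powr \<alpha>) + Cst * real K * exp (- (t / \<tau>))"
      unfolding Cst_def by (simp add: algebra_simps)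
    also have "\<dots> \<le> Cst * (C_mt * t powr \<alpha>) + Cst * real K * (\<tau> / t)"
    proof -
      have "exp (- (t / \<tau>)) \<le> 1 / (t / \<tau>)" using t tau by (intro exp_neg_le) simp
      then have "exp (- (t / \<tau>)) \<le> \<tau> / t" by simp
      then show ?thesis using Cst0 K0 by (intro add_left_mono mult_left_mono) auto
    qed
    also have "\<dots> \<le> e" using td tau by blast
    finally show "\<bar>soft_risk M X Y K f a \<tau> q - hard_risk M X Y K f a q\<bar> \<le> e" .
  qed
  then show ?thesis using d by blast
qed


lemma hard_cont:
  fixes M :: "'w measure" and X :: "'w \<Rightarrow> real ^ 'd" and f :: "nat \<Rightarrow> 't \<Rightarrow> real ^ 'd \<Rightarrow> real"
    and a :: "'f \<Rightarrow> real ^ 'd \<Rightarrow> nat \<Rightarrow> real" and T :: "((nat \<Rightarrow> 't) \<times> 'f) topology"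
  assumes M: "prob_space M"
    and K2: "K \<ge> 2"
    and Xmeas: "X \<in> M \<rightarrow>\<^sub>M borel"
    and XinX: "\<forall>\<omega>\<in>space M. X \<omega> \<in> Xset"
    and Ymeas: "Y \<in> borel_measurable M"
    and f_L2: "\<forall>k<K. \<forall>t\<in>Theta k. in_L2 (distr M borel X) (f k t)"
    and a_L2: "\<forall>\<phi>\<in>Phi. \<forall>k<K. in_L2 (distr M borel X) (\<lambda>x. a \<phi> x k)"
    and C0: "C_mt > 0" and al: "\<alpha> > 0"
    and mc: "\<forall>\<phi>\<in>Phi. \<forall>t>0. measure M {\<omega>\<in>space M. margin K (a \<phi> (X \<omega>)) \<le> t} \<le> C_mt * t powr \<alpha>"
    and Yb: "AE \<omega> in M. \<bar>Y \<omega>\<bar> \<le> B_Y"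
    and fb: "\<forall>k<K. \<forall>x\<in>Xset. \<forall>t\<in>Theta k. \<bar>f k t x\<bar> \<le> B_f"
    and Bf: "B_f > 0" and BY: "B_Y > 0"
    and topspace_T: "topspace T = (PiE {..<K} Theta) \<times> Phi"
    and f_cont: "\<forall>k<K. L2_continuous T (distr M borel X) (\<lambda>p. f k (fst p k))"
    and a_cont_Linf: "\<forall>k<K. Linf_continuous T (distr M borel X) (\<lambda>p x. a (snd p) x k)"
    and p: "p \<in> topspace T"
    and e: "e > 0"
  shows "\<exists>U. openin T U \<and> p \<in> U \<and>
     (\<forall>q\<in>U. \<bar>hard_risk M X Y K f a q - hard_risk M X Y K f a p\<bar> < e)"
proof -
  interpret prob_space M by (rule M)
  define Cc where "Cc = 2 * (B_Y + B_f)"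
  have Cc0: "Cc > 0" unfolding Cc_def using Bf BY by simp
  have K0: "K > 0" using K2 by simp
  have CB0: "Cc * (2 * B_f) > 0" using Cc0 Bf by simp
  obtain t where t: "t > 0" "Cc * (2 * B_f) * (C_mt * t powr \<alpha>) \<le> e / 4"
    using choose_t[OF CB0 C0 al, of "e/4"] e by auto
  define \<epsilon> where "\<epsilon> = t / 2"
  have eps: "\<epsilon> > 0" "2 * \<epsilon> = t" unfolding \<epsilon>_def using t by auto
  define \<delta>0 where "\<delta>0 = e / (8 * Cc * K)"
  have d0: "\<delta>0 > 0" unfolding \<delta>0_def using e Cc0 K0 by simp
  have d0e: "Cc * (real K * (2 * \<delta>0)) = e / 4" unfolding \<delta>0_def using Cc0 K0 by (simp add: field_simps)
  have "\<forall>k\<in>{..<K}. \<exists>U. openin T U \<and> p \<in> U \<and>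
      (\<forall>q\<in>U. AE x in distr M borel X. \<bar>a (snd q) x k - a (snd p) x k\<bar> \<le> \<epsilon>)"
  proof
    fix k assume "k \<in> {..<K}"
    then have "Linf_continuous T (distr M borel X) (\<lambda>p x. a (snd p) x k)" using a_cont_Linf by simp
    then show "\<exists>U. openin T U \<and> p \<in> U \<and>
      (\<forall>q\<in>U. AE x in distr M borel X. \<bar>a (snd q) x k - a (snd p) x k\<bar> \<le> \<epsilon>)"
      using p eps(1) unfolding Linf_continuous_def by blast
  qed
  then have "\<exists>Ua. \<forall>k\<in>{..<K}. openin T (Ua k) \<and> p \<in> Ua k \<and>
      (\<forall>q\<in>Ua k. AE x in distr M borel X. \<bar>a (snd q) x k - a (snd p) x k\<bar> \<le> \<epsilon>)"
    by (rule bchoice)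
  then obtain Ua where Ua: "\<forall>k\<in>{..<K}. openin T (Ua k) \<and> p \<in> Ua k \<and>
      (\<forall>q\<in>Ua k. AE x in distr M borel X. \<bar>a (snd q) x k - a (snd p) x k\<bar> \<le> \<epsilon>)"
    by blast
  have "\<forall>k\<in>{..<K}. \<exists>U. openin T U \<and> p \<in> U \<and>
      (\<forall>q\<in>U. (\<integral>x. (f k (fst q k) x - f k (fst p k) x)\<^sup>2 \<partial>distr M borel X) < \<delta>0\<^sup>2)"
  proof
    fix k assume "k \<in> {..<K}"
    then have "L2_continuous T (distr M borel X) (\<lambda>p. f k (fst p k))" using f_cont by simp
    moreover have "\<delta>0\<^sup>2 > 0" using d0 by simp
    ultimately show "\<exists>U. openin T U \<and> p \<in> U \<and>
      (\<forall>q\<in>U. (\<integral>x. (f k (fst q k) x - f k (fst p k) x)\<^sup>2 \<partial>distr M borel X) < \<delta>0\<^sup>2)"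
      using p unfolding L2_continuous_def by blast
  qed
  then have "\<exists>Uf. \<forall>k\<in>{..<K}. openin T (Uf k) \<and> p \<in> Uf k \<and>
      (\<forall>q\<in>Uf k. (\<integral>x. (f k (fst q k) x - f k (fst p k) x)\<^sup>2 \<partial>distr M borel X) < \<delta>0\<^sup>2)"
    by (rule bchoice)
  then obtain Uf where Uf: "\<forall>k\<in>{..<K}. openin T (Uf k) \<and> p \<in> Uf k \<and>
      (\<forall>q\<in>Uf k. (\<integral>x. (f k (fst q k) x - f k (fst p k) x)\<^sup>2 \<partial>distr M borel X) < \<delta>0\<^sup>2)"
    by blast
  define U where "U = (\<Inter>k\<in>{..<K}. Ua k \<inter> Uf k) \<inter> topspace T"
  have Uo: "openin T U" unfolding U_def using Ua Uf by (intro openin_INT openin_Int) auto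
  have pU: "p \<in> U" unfolding U_def using Ua Uf p by auto
  note pf = p_facts[OF Xmeas XinX f_L2 a_L2 fb topspace_T p]
  define Ap where "Ap \<omega> = a (snd p) (X \<omega>)" for \<omega>
  define Gp where "Gp k \<omega> = f k (fst p k) (X \<omega>)" for k \<omega>
  define hp where "hp \<omega> = Gp (hard_winner K (Ap \<omega>)) \<omega>" for \<omega>
  have Apm: "(\<lambda>\<omega>. Ap \<omega> k) \<in> borel_measurable M" if "k < K" for k
    unfolding Ap_def using pf(2)[OF that] .
  have Gpm: "Gp k \<in> borel_measurable M" if "k < K" for k
    unfolding Gp_def using pf(1)[OF that] .
  have Gpb: "\<bar>Gp k \<omega>\<bar> \<le> B_f" if "k < K" "\<omega> \<in> space M" for k \<omega>
    unfolding Gp_def using pf(3)[OF that] .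
  have hpm: "hp \<in> borel_measurable M" unfolding hp_def by (rule meas_hard[OF K0 Apm Gpm])
  have hpb: "\<forall>\<omega>\<in>space M. \<bar>hp \<omega>\<bar> \<le> B_f"
    unfolding hp_def using Gpb hw_props[OF K0] by blast
  have hpr: "hard_risk M X Y K f a p = (\<integral>\<omega>. (Y \<omega> - hp \<omega>)\<^sup>2 \<partial>M)"
    by (simp add: hard_risk_def hard_pred_def Let_def hp_def Ap_def Gp_def)
  define S where "S = {\<omega>\<in>space M. margin K (Ap \<omega>) \<le> t}"
  have Ss: "S \<in> sets M" unfolding S_def
    by (rule borel_measurable_le[OF meas_margin[OF K2 Apm] borel_measurable_const])
  have Smeas: "measure M S \<le> C_mt * t powr \<alpha>"
    using mc pf(4) t unfolding S_def Ap_def by auto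
  have main: "\<bar>hard_risk M X Y K f a q - hard_risk M X Y K f a p\<bar> < e" if qU: "q \<in> U" for q
  proof -
    have q: "q \<in> topspace T" using qU U_def by auto
    have qa: "\<And>k. k < K \<Longrightarrow> AE x in distr M borel X. \<bar>a (snd q) x k - a (snd p) x k\<bar> \<le> \<epsilon>"
      using qU Ua unfolding U_def by auto
    have qf: "\<And>k. k < K \<Longrightarrow> (\<integral>x. (f k (fst q k) x - f k (fst p k) x)\<^sup>2 \<partial>distr M borel X) < \<delta>0\<^sup>2"
      using qU Uf unfolding U_def by auto
    note qf_ = p_facts[OF Xmeas XinX f_L2 a_L2 fb topspace_T q]
    define Aq where "Aq \<omega> = a (snd q) (X \<omega>)" for \<omega>
    define Gq where "Gq k \<omega> = f k (fst q k) (X \<omega>)" for k \<omega>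
    define hq where "hq \<omega> = Gq (hard_winner K (Aq \<omega>)) \<omega>" for \<omega>
    have Aqm: "(\<lambda>\<omega>. Aq \<omega> k) \<in> borel_measurable M" if "k < K" for k
      unfolding Aq_def using qf_(2)[OF that] .
    have Gqm: "Gq k \<in> borel_measurable M" if "k < K" for k
      unfolding Gq_def using qf_(1)[OF that] .
    have Gqb: "\<bar>Gq k \<omega>\<bar> \<le> B_f" if "k < K" "\<omega> \<in> space M" for k \<omega>
      unfolding Gq_def using qf_(3)[OF that] .
    have hqm: "hq \<in> borel_measurable M" unfolding hq_def by (rule meas_hard[OF K0 Aqm Gqm])
    have hqb: "\<forall>\<omega>\<in>space M. \<bar>hq \<omega>\<bar> \<le> B_f"
      unfolding hq_def using Gqb hw_props[OF K0] by blast
    have hqr: "hard_risk M X Y K f a q = (\<integral>\<omega>. (Y \<omega> - hq \<omega>)\<^sup>2 \<partial>M)"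
      by (simp add: hard_risk_def hard_pred_def Let_def hq_def Aq_def Gq_def)
    note rd = risk_diff[OF M hqm hpm Ymeas Yb hqb hpb]
    have dm: "(\<lambda>\<omega>. Gq k \<omega> - Gp k \<omega>) \<in> borel_measurable M" if "k < K" for k
      using Gqm[OF that] Gpm[OF that] by (rule borel_measurable_diff)
    have db: "\<forall>\<omega>\<in>space M. \<bar>Gq k \<omega> - Gp k \<omega>\<bar> \<le> 2 * B_f" if "k < K" for k
    proof
      fix \<omega> assume w: "\<omega> \<in> space M"
      have "\<bar>Gq k \<omega> - Gp k \<omega>\<bar> \<le> \<bar>Gq k \<omega>\<bar> + \<bar>Gp k \<omega>\<bar>" by (rule abs_triangle_ineq4)
      then show "\<bar>Gq k \<omega> - Gp k \<omega>\<bar> \<le> 2 * B_f" using Gqb[OF that w] Gpb[OF that w] by linarith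
    qed
    have L2M: "(\<integral>\<omega>. (Gq k \<omega> - Gp k \<omega>)\<^sup>2 \<partial>M) < \<delta>0\<^sup>2" if k: "k < K" for k
    proof -
      have m1: "f k (fst q k) \<in> borel_measurable borel" using f_L2 k qf_(5)[OF k] by (auto simp: in_L2_def)
      have m2: "f k (fst p k) \<in> borel_measurable borel" using f_L2 k pf(5)[OF k] by (auto simp: in_L2_def)
      have "(\<lambda>x. (f k (fst q k) x - f k (fst p k) x)\<^sup>2) \<in> borel_measurable borel"
        using m1 m2 by (intro borel_measurable_power borel_measurable_diff)
      then have "(\<integral>x. (f k (fst q k) x - f k (fst p k) x)\<^sup>2 \<partial>distr M borel X)
          = (\<integral>\<omega>. (Gq k \<omega> - Gp k \<omega>)\<^sup>2 \<partial>M)"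
        unfolding Gq_def Gp_def by (rule integral_distr[OF Xmeas])
      then show ?thesis using qf[OF k] by simp
    qed
    have L1: "(\<integral>\<omega>. \<bar>Gq k \<omega> - Gp k \<omega>\<bar> \<partial>M) \<le> 2 * \<delta>0" if k: "k < K" for k
    proof -
      have i2: "integrable M (\<lambda>\<omega>. (Gq k \<omega> - Gp k \<omega>)\<^sup>2)"
      proof (rule bdd_integrable[OF M, where B="(2*B_f)\<^sup>2"])
        show "(\<lambda>\<omega>. (Gq k \<omega> - Gp k \<omega>)\<^sup>2) \<in> borel_measurable M"
          using dm[OF k] by (rule borel_measurable_power)
        show "\<forall>\<omega>\<in>space M. \<bar>(Gq k \<omega> - Gp k \<omega>)\<^sup>2\<bar> \<le> (2 * B_f)\<^sup>2"
        proof
          fix \<omega> assume "\<omega> \<in> space M"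
          then have "\<bar>Gq k \<omega> - Gp k \<omega>\<bar> \<le> 2 * B_f" using db[OF k] by blast
          then have "\<bar>Gq k \<omega> - Gp k \<omega>\<bar>\<^sup>2 \<le> (2 * B_f)\<^sup>2" by (rule power_mono) simp
          then show "\<bar>(Gq k \<omega> - Gp k \<omega>)\<^sup>2\<bar> \<le> (2 * B_f)\<^sup>2" by simp
        qed
      qed
      have i1: "integrable M (\<lambda>\<omega>. \<bar>Gq k \<omega> - Gp k \<omega>\<bar>)"
        using M _ _ by (rule bdd_integrable[where B="2*B_f"]) (use dm[OF k] db[OF k] in auto)
      have "(\<integral>\<omega>. \<bar>Gq k \<omega> - Gp k \<omega>\<bar> \<partial>M) \<le> (\<integral>\<omega>. \<delta>0 + (Gq k \<omega> - Gp k \<omega>)\<^sup>2 / \<delta>0 \<partial>M)"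
        using i1 i2 d0 by (intro integral_mono abs_le_sq) auto
      also have "\<dots> = \<delta>0 + (\<integral>\<omega>. (Gq k \<omega> - Gp k \<omega>)\<^sup>2 \<partial>M) / \<delta>0"
        using i2 by (simp add: prob_space)
      also have "\<dots> \<le> \<delta>0 + \<delta>0\<^sup>2 / \<delta>0"
        using L2M[OF k] d0 by (intro add_left_mono divide_right_mono) auto
      also have "\<dots> = 2 * \<delta>0" using d0 by (simp add: power2_eq_square)
      finally show ?thesis .
    qed
    have AEclose: "AE \<omega> in M. \<forall>k\<in>{..<K}. \<bar>Aq \<omega> k - Ap \<omega> k\<bar> \<le> \<epsilon>"
    proof (rule AE_finite_allI)
      fix k assume "k \<in> {..<K}"
      then show "AE \<omega> in M. \<bar>Aq \<omega> k - Ap \<omega> k\<bar> \<le> \<epsilon>"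
        unfolding Aq_def Ap_def using AE_distrD[OF Xmeas qa] by auto
    qed simp
    have pw: "AE \<omega> in M. \<bar>hq \<omega> - hp \<omega>\<bar> \<le> 2 * B_f * indicator S \<omega> + (\<Sum>k<K. \<bar>Gq k \<omega> - Gp k \<omega>\<bar>)"
      using AEclose
    proof (rule AE_mp, intro AE_I2 impI)
      fix \<omega> assume w: "\<omega> \<in> space M" and cl: "\<forall>k\<in>{..<K}. \<bar>Aq \<omega> k - Ap \<omega> k\<bar> \<le> \<epsilon>"
      have sum0: "0 \<le> (\<Sum>k<K. \<bar>Gq k \<omega> - Gp k \<omega>\<bar>)" by (rule sum_nonneg) simp
      show "\<bar>hq \<omega> - hp \<omega>\<bar> \<le> 2 * B_f * indicator S \<omega> + (\<Sum>k<K. \<bar>Gq k \<omega> - Gp k \<omega>\<bar>)"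
      proof (cases "\<omega> \<in> S")
        case True
        have "\<bar>hq \<omega> - hp \<omega>\<bar> \<le> \<bar>hq \<omega>\<bar> + \<bar>hp \<omega>\<bar>" by (rule abs_triangle_ineq4)
        also have "\<dots> \<le> 2 * B_f" using hqb hpb w by (smt (verit))
        finally have "\<bar>hq \<omega> - hp \<omega>\<bar> \<le> 2 * B_f" .
        moreover have "2 * B_f * indicator S \<omega> = 2 * B_f" using True by simp
        ultimately show ?thesis using sum0 by linarith
      next
        case False
        then have "margin K (Ap \<omega>) > 2 * \<epsilon>" using w eps by (auto simp: S_def)
        then have same: "hard_winner K (Aq \<omega>) = hard_winner K (Ap \<omega>)"
          using cl by (intro hw_stable[OF K2]) auto
        let ?k = "hard_winner K (Ap \<omega>)"
        have kK: "?k < K" using hw_props[OF K0] by blast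
        have "\<bar>hq \<omega> - hp \<omega>\<bar> = \<bar>Gq ?k \<omega> - Gp ?k \<omega>\<bar>" unfolding hq_def hp_def same ..
        also have "\<dots> \<le> (\<Sum>k<K. \<bar>Gq k \<omega> - Gp k \<omega>\<bar>)"
          using kK by (intro member_le_sum) auto
        finally show ?thesis using False by simp
      qed
    qed
    have iS: "integrable M (\<lambda>\<omega>. 2 * B_f * indicator S \<omega> :: real)"
      using Ss by (intro integrable_mult_right integrable_real_indicator) (auto simp: emeasure_eq_measure)
    have iG: "integrable M (\<lambda>\<omega>. \<bar>Gq k \<omega> - Gp k \<omega>\<bar>)" if "k \<in> {..<K}" for k
      using M _ _ by (rule bdd_integrable[where B="2*B_f"]) (use dm db that in auto)
    have "(\<integral>\<omega>. \<bar>hq \<omega> - hp \<omega>\<bar> \<partial>M)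
        \<le> (\<integral>\<omega>. 2 * B_f * indicator S \<omega> + (\<Sum>k<K. \<bar>Gq k \<omega> - Gp k \<omega>\<bar>) \<partial>M)"
      using rd(2) iS iG pw by (intro integral_mono_AE Bochner_Integration.integrable_add integrable_sum) auto
    also have "\<dots> = 2 * B_f * measure M S + (\<Sum>k<K. \<integral>\<omega>. \<bar>Gq k \<omega> - Gp k \<omega>\<bar> \<partial>M)"
    proof -
      have isum: "integrable M (\<lambda>\<omega>. \<Sum>k<K. \<bar>Gq k \<omega> - Gp k \<omega>\<bar>)"
        by (rule Bochner_Integration.integrable_sum) (rule iG)
      have "(\<integral>\<omega>. 2 * B_f * indicator S \<omega> + (\<Sum>k<K. \<bar>Gq k \<omega> - Gp k \<omega>\<bar>) \<partial>M)
          = (\<integral>\<omega>. 2 * B_f * indicator S \<omega> \<partial>M) + (\<integral>\<omega>. (\<Sum>k<K. \<bar>Gq k \<omega> - Gp k \<omega>\<bar>) \<partial>M)"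
        by (rule Bochner_Integration.integral_add[OF iS isum])
      also have "(\<integral>\<omega>. 2 * B_f * indicator S \<omega> \<partial>M) = 2 * B_f * measure M S"
        using Ss sets.sets_into_space[OF Ss] by (simp add: Int_absorb2)
      also have "(\<integral>\<omega>. (\<Sum>k<K. \<bar>Gq k \<omega> - Gp k \<omega>\<bar>) \<partial>M) = (\<Sum>k<K. \<integral>\<omega>. \<bar>Gq k \<omega> - Gp k \<omega>\<bar> \<partial>M)"
        by (rule Bochner_Integration.integral_sum) (rule iG)
      finally show ?thesis .
    qed
    also have "\<dots> \<le> 2 * B_f * (C_mt * t powr \<alpha>) + (\<Sum>k<K. 2 * \<delta>0)"
      using Smeas Bf L1 by (intro add_mono sum_mono mult_left_mono) auto
    also have "\<dots> = 2 * B_f * (C_mt * t powr \<alpha>) + real K * (2 * \<delta>0)" by simp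
    finally have I: "(\<integral>\<omega>. \<bar>hq \<omega> - hp \<omega>\<bar> \<partial>M) \<le> 2 * B_f * (C_mt * t powr \<alpha>) + real K * (2 * \<delta>0)" .
    have "\<bar>hard_risk M X Y K f a q - hard_risk M X Y K f a p\<bar> \<le> Cc * (\<integral>\<omega>. \<bar>hq \<omega> - hp \<omega>\<bar> \<partial>M)"
      unfolding hqr hpr Cc_def by (rule rd(1))
    also have "\<dots> \<le> Cc * (2 * B_f * (C_mt * t powr \<alpha>) + real K * (2 * \<delta>0))"
      using I Cc0 by (intro mult_left_mono) auto
    also have "\<dots> = Cc * (2 * B_f) * (C_mt * t powr \<alpha>) + Cc * (real K * (2 * \<delta>0))"
      by (simp add: algebra_simps)
    also have "\<dots> \<le> e / 4 + e / 4" using t(2) d0e by simp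
    also have "\<dots> < e" using e by simp
    finally show ?thesis .
  qed
  show ?thesis using Uo pU main by blast
qed


lemma at_right0_nontriv: "\<not> trivial_limit (at_right (0::real))"
  by simp

lemma abstract_gamma:
  fixes T :: "'p topology" and F :: "real \<Rightarrow> 'p \<Rightarrow> real" and Fz :: "'p \<Rightarrow> real"
  assumes unif: "\<And>e. e > 0 \<Longrightarrow> \<exists>\<delta>>0. \<forall>\<tau>. 0 < \<tau> \<and> \<tau> < \<delta> \<longrightarrow> (\<forall>q\<in>topspace T. \<bar>F \<tau> q - Fz q\<bar> \<le> e)"
    and cont: "\<And>p e. p \<in> topspace T \<Longrightarrow> e > 0 \<Longrightarrow> \<exists>U. openin T U \<and> p \<in> U \<and> (\<forall>q\<in>U. \<bar>Fz q - Fz p\<bar> < e)"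
    and nonneg: "\<And>\<tau> q. F \<tau> q \<ge> 0"
    and cpt: "compact_space T"
  shows "gamma_converges T (\<lambda>\<tau> p. F \<tau> p) Fz
    \<and> (\<forall>g p. (\<forall>\<tau>>0. g \<tau> \<in> topspace T) \<and> limitin T g p (at_right 0) \<longrightarrow>
          ereal (Fz p) \<le> Liminf (at_right 0) (\<lambda>\<tau>. ereal (F \<tau> (g \<tau>))))
    \<and> (\<forall>p\<in>topspace T. \<exists>g. (\<forall>\<tau>>0. g \<tau> \<in> topspace T) \<and> limitin T g p (at_right 0) \<and>
          Limsup (at_right 0) (\<lambda>\<tau>. ereal (F \<tau> (g \<tau>))) \<le> ereal (Fz p))
    \<and> (\<forall>g. (\<forall>\<tau>>0. g \<tau> \<in> topspace T) \<and>
          ((\<lambda>\<tau>. F \<tau> (g \<tau>) - (INF q\<in>topspace T. F \<tau> q)) \<longlongrightarrow> 0) (at_right 0)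
        \<longrightarrow> compactin T (T closure_of (g ` {0<..}))
          \<and> (\<forall>p\<in>topspace T. (\<forall>U. openin T U \<and> p \<in> U \<longrightarrow> (\<exists>\<^sub>F \<tau> in at_right 0. g \<tau> \<in> U))
                \<longrightarrow> (\<forall>q\<in>topspace T. Fz p \<le> Fz q)))"
proof -
  have ev_small: "eventually (\<lambda>\<tau>. 0 < \<tau> \<and> \<tau> < \<delta>) (at_right (0::real))" if "\<delta> > 0" for \<delta>
    using that by (auto simp: eventually_at_right_field intro: exI[of _ \<delta>])
  have unif_ev: "eventually (\<lambda>\<tau>. \<forall>q\<in>topspace T. \<bar>F \<tau> q - Fz q\<bar> \<le> e) (at_right 0)" if e_pos: "e > 0" for e
  proof -
    obtain \<delta> where "\<delta> > 0" "\<forall>\<tau>. 0 < \<tau> \<and> \<tau> < \<delta> \<longrightarrow> (\<forall>q\<in>topspace T. \<bar>F \<tau> q - Fz q\<bar> \<le> e)"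
      using unif[OF e_pos] by blast
    then show ?thesis using ev_small[OF \<open>\<delta> > 0\<close>] by (auto elim: eventually_mono)
  qed
  have lim_g: "((\<lambda>\<tau>. F \<tau> (g \<tau>)) \<longlongrightarrow> Fz p) (at_right 0)"
    if g: "\<forall>\<tau>>0. g \<tau> \<in> topspace T" and lg: "limitin T g p (at_right 0)" for g p
  proof (rule tendstoI)
    fix e :: real assume e: "e > 0"
    have p: "p \<in> topspace T" using lg by (simp add: limitin_def)
    obtain U where U: "openin T U" "p \<in> U" "\<forall>q\<in>U. \<bar>Fz q - Fz p\<bar> < e/2"
      using cont[OF p, of "e/2"] e by auto
    have "eventually (\<lambda>\<tau>. g \<tau> \<in> U) (at_right 0)" using lg U by (simp add: limitin_def)
    moreover have "eventually (\<lambda>\<tau>. \<forall>q\<in>topspace T. \<bar>F \<tau> q - Fz q\<bar> \<le> e/4) (at_right 0)"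
      using unif_ev[of "e/4"] e by simp
    moreover have "eventually (\<lambda>\<tau>. \<tau> > 0) (at_right (0::real))"
      by (simp add: eventually_at_right_less)
    ultimately show "eventually (\<lambda>\<tau>. dist (F \<tau> (g \<tau>)) (Fz p) < e) (at_right 0)"
    proof eventually_elim
      case (elim \<tau>)
      then have "\<bar>F \<tau> (g \<tau>) - Fz (g \<tau>)\<bar> \<le> e/4" using g by auto
      moreover have "\<bar>Fz (g \<tau>) - Fz p\<bar> < e/2" using elim U by auto
      ultimately show ?case using e unfolding dist_real_def by arith
    qed
  qed
  have liminf_g: "Liminf (at_right 0) (\<lambda>\<tau>. ereal (F \<tau> (g \<tau>))) = ereal (Fz p)"
    and limsup_g: "Limsup (at_right 0) (\<lambda>\<tau>. ereal (F \<tau> (g \<tau>))) = ereal (Fz p)"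
    if g: "\<forall>\<tau>>0. g \<tau> \<in> topspace T" and lg: "limitin T g p (at_right 0)" for g p
  proof -
    have t: "((\<lambda>\<tau>. ereal (F \<tau> (g \<tau>))) \<longlongrightarrow> ereal (Fz p)) (at_right 0)"
      using lim_g[OF g lg] by (rule tendsto_ereal)
    show "Liminf (at_right 0) (\<lambda>\<tau>. ereal (F \<tau> (g \<tau>))) = ereal (Fz p)"
      by (rule lim_imp_Liminf[OF at_right0_nontriv t])
    show "Limsup (at_right 0) (\<lambda>\<tau>. ereal (F \<tau> (g \<tau>))) = ereal (Fz p)"
      by (rule lim_imp_Limsup[OF at_right0_nontriv t])
  qed
  have part1: "gamma_converges T (\<lambda>\<tau> p. F \<tau> p) Fz"
    unfolding gamma_converges_def
  proof (intro ballI conjI)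
    fix p assume p: "p \<in> topspace T"
    have ls: "gamma_limsup T F p \<le> ereal (Fz p)"
      unfolding gamma_limsup_def
    proof (rule SUP_least)
      fix U assume "U \<in> {U. openin T U \<and> p \<in> U}"
      then have pU: "p \<in> U" by auto
      have "Limsup (at_right 0) (\<lambda>\<tau>. INF q\<in>U. ereal (F \<tau> q)) \<le> Limsup (at_right 0) (\<lambda>\<tau>. ereal (F \<tau> p))"
        by (rule Limsup_mono) (use pU in \<open>auto intro!: always_eventually INF_lower\<close>)
      also have "\<dots> = ereal (Fz p)" using limsup_g[of "\<lambda>_. p" p] p by simp
      finally show "Limsup (at_right 0) (\<lambda>\<tau>. INF q\<in>U. ereal (F \<tau> q)) \<le> ereal (Fz p)" .
    qed
    have li: "ereal (Fz p) \<le> gamma_liminf T F p"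
    proof (rule ereal_le_epsilon2)
      fix e :: real assume e: "e > 0"
      obtain U where U: "openin T U" "p \<in> U" "\<forall>q\<in>U. \<bar>Fz q - Fz p\<bar> < e/2"
        using cont[OF p, of "e/2"] e by auto
      have Usub: "U \<subseteq> topspace T" using U(1) by (simp add: openin_subset)
      have "ereal (Fz p - e) \<le> Liminf (at_right 0) (\<lambda>\<tau>. INF q\<in>U. ereal (F \<tau> q))"
      proof (rule Liminf_bounded)
        show "eventually (\<lambda>\<tau>. ereal (Fz p - e) \<le> (INF q\<in>U. ereal (F \<tau> q))) (at_right 0)"
          using unif_ev[OF half_gt_zero[OF e]]
        proof (elim eventually_mono)
          fix \<tau> assume H: "\<forall>q\<in>topspace T. \<bar>F \<tau> q - Fz q\<bar> \<le> e/2"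
          show "ereal (Fz p - e) \<le> (INF q\<in>U. ereal (F \<tau> q))"
          proof (rule INF_greatest)
            fix q assume q: "q \<in> U"
            then have "\<bar>F \<tau> q - Fz q\<bar> \<le> e/2" using H Usub by auto
            moreover have "\<bar>Fz q - Fz p\<bar> < e/2" using U q by auto
            ultimately show "ereal (Fz p - e) \<le> ereal (F \<tau> q)"
              unfolding ereal_less_eq(3) abs_le_iff abs_less_iff by linarith
          qed
        qed
      qed
      also have "\<dots> \<le> gamma_liminf T F p"
        unfolding gamma_liminf_def by (rule SUP_upper) (use U in auto)
      finally show "ereal (Fz p) \<le> gamma_liminf T F p + ereal e"
        by (cases "gamma_liminf T F p") auto
    qed
    have "gamma_liminf T F p \<le> gamma_limsup T F p"
      unfolding gamma_liminf_def gamma_limsup_def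
      by (rule SUP_mono) (auto intro: Liminf_le_Limsup[OF at_right0_nontriv])
    then show "gamma_liminf T (\<lambda>\<tau> p. F \<tau> p) p = ereal (Fz p)"
      and "gamma_limsup T (\<lambda>\<tau> p. F \<tau> p) p = ereal (Fz p)"
      using li ls by auto
  qed
  have part4: "compactin T (T closure_of (g ` {0<..}))
          \<and> (\<forall>p\<in>topspace T. (\<forall>U. openin T U \<and> p \<in> U \<longrightarrow> (\<exists>\<^sub>F \<tau> in at_right 0. g \<tau> \<in> U))
                \<longrightarrow> (\<forall>q\<in>topspace T. Fz p \<le> Fz q))"
    if g: "\<forall>\<tau>>0. g \<tau> \<in> topspace T"
      and gm: "((\<lambda>\<tau>. F \<tau> (g \<tau>) - (INF q\<in>topspace T. F \<tau> q)) \<longlongrightarrow> 0) (at_right 0)" for g :: "real \<Rightarrow> 'p"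
  proof (intro conjI ballI impI)
    show "compactin T (T closure_of (g ` {0<..}))"
      using cpt unfolding compact_space_def
      by (rule closed_compactin) (auto simp: closure_of_subset_topspace)
  next
    fix p q assume p: "p \<in> topspace T" and q: "q \<in> topspace T"
      and fr: "\<forall>U. openin T U \<and> p \<in> U \<longrightarrow> (\<exists>\<^sub>F \<tau> in at_right 0. g \<tau> \<in> U)"
    show "Fz p \<le> Fz q"
    proof (rule field_le_epsilon)
      fix e :: real assume e: "e > 0"
      obtain U where U: "openin T U" "p \<in> U" "\<forall>r\<in>U. \<bar>Fz r - Fz p\<bar> < e/4"
        using cont[OF p, of "e/4"] e by auto
      have "eventually (\<lambda>\<tau>. dist (F \<tau> (g \<tau>) - (INF q\<in>topspace T. F \<tau> q)) 0 < e/4) (at_right 0)"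
        using gm e unfolding tendsto_iff by (meson divide_pos_pos zero_less_numeral)
      moreover have "eventually (\<lambda>\<tau>. \<forall>q\<in>topspace T. \<bar>F \<tau> q - Fz q\<bar> \<le> e/4) (at_right 0)"
        using unif_ev[of "e/4"] e by simp
      moreover have "eventually (\<lambda>\<tau>. \<tau> > 0) (at_right (0::real))"
        by (simp add: eventually_at_right_less)
      ultimately have ev: "eventually (\<lambda>\<tau>. g \<tau> \<in> U \<longrightarrow> Fz p \<le> Fz q + e) (at_right 0)"
      proof eventually_elim
        case (elim \<tau>)
        show ?case
        proof
          assume gU: "g \<tau> \<in> U"
          have bdd: "bdd_below (F \<tau> ` topspace T)" using nonneg by (intro bdd_belowI[of _ 0]) auto
          have "(INF q\<in>topspace T. F \<tau> q) \<le> F \<tau> q" by (rule cINF_lower[OF bdd q])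
          moreover have "\<bar>F \<tau> (g \<tau>) - Fz (g \<tau>)\<bar> \<le> e/4" using elim g by auto
          moreover have "\<bar>F \<tau> q - Fz q\<bar> \<le> e/4" using elim q by auto
          moreover have "\<bar>Fz (g \<tau>) - Fz p\<bar> < e/4" using U gU by auto
          ultimately show "Fz p \<le> Fz q + e" using elim(1) unfolding dist_real_def abs_le_iff abs_less_iff by linarith
        qed
      qed
      have frU: "\<exists>\<^sub>F \<tau> in at_right 0. g \<tau> \<in> U" using fr U by auto
      have "\<exists>\<^sub>F \<tau> in at_right (0::real). Fz p \<le> Fz q + e" by (rule frequently_mp[OF ev frU])
      then show "Fz p \<le> Fz q + e" by (simp add: frequently_const_iff)
    qed
  qed
  have B: "\<forall>g p. (\<forall>\<tau>>0. g \<tau> \<in> topspace T) \<and> limitin T g p (at_right 0) \<longrightarrow>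
          ereal (Fz p) \<le> Liminf (at_right 0) (\<lambda>\<tau>. ereal (F \<tau> (g \<tau>)))"
    using liminf_g by auto
  have C: "\<forall>p\<in>topspace T. \<exists>g. (\<forall>\<tau>>0. g \<tau> \<in> topspace T) \<and> limitin T g p (at_right 0) \<and>
          Limsup (at_right 0) (\<lambda>\<tau>. ereal (F \<tau> (g \<tau>))) \<le> ereal (Fz p)"
  proof
    fix p assume p: "p \<in> topspace T"
    show "\<exists>g. (\<forall>\<tau>>0. g \<tau> \<in> topspace T) \<and> limitin T g p (at_right 0) \<and>
          Limsup (at_right 0) (\<lambda>\<tau>. ereal (F \<tau> (g \<tau>))) \<le> ereal (Fz p)"
      by (rule exI[of _ "\<lambda>_. p"]) (use p limsup_g[of "\<lambda>_. p" p] in auto)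
  qed
  have D: "\<forall>g. (\<forall>\<tau>>0. g \<tau> \<in> topspace T) \<and>
          ((\<lambda>\<tau>. F \<tau> (g \<tau>) - (INF q\<in>topspace T. F \<tau> q)) \<longlongrightarrow> 0) (at_right 0)
        \<longrightarrow> compactin T (T closure_of (g ` {0<..}))
          \<and> (\<forall>p\<in>topspace T. (\<forall>U. openin T U \<and> p \<in> U \<longrightarrow> (\<exists>\<^sub>F \<tau> in at_right 0. g \<tau> \<in> U))
                \<longrightarrow> (\<forall>q\<in>topspace T. Fz p \<le> Fz q))"
    using part4 by blast
  show ?thesis using part1 B C D by blast
qed


theorem mainTheorem2:
  fixes M :: "'w measure"
    and X :: "'w \<Rightarrow> real ^ 'd"
    and Y :: "'w \<Rightarrow> real"
    and Xset :: "(real ^ 'd) set"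
    and K :: nat
    and f :: "nat \<Rightarrow> 't \<Rightarrow> real ^ 'd \<Rightarrow> real"
    and a :: "'f \<Rightarrow> real ^ 'd \<Rightarrow> nat \<Rightarrow> real"
    and Theta :: "nat \<Rightarrow> 't set"
    and Phi :: "'f set"
    and T :: "((nat \<Rightarrow> 't) \<times> 'f) topology"
    and C_mt \<alpha> B_Y B_f :: real
  assumes M: "prob_space M"
    and K2: "K \<ge> 2"
    and Xset: "Xset \<in> sets borel"
    and Xmeas: "X \<in> M \<rightarrow>\<^sub>M borel"
    and XinX: "\<forall>\<omega>\<in>space M. X \<omega> \<in> Xset"
    and Ymeas: "Y \<in> borel_measurable M"
    and f_L2: "\<forall>k<K. \<forall>t\<in>Theta k. in_L2 (distr M borel X) (f k t)"
    and a_L2: "\<forall>\<phi>\<in>Phi. \<forall>k<K. in_L2 (distr M borel X) (\<lambda>x. a \<phi> x k)"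
    and a_Linf: "\<forall>\<phi>\<in>Phi. \<forall>k<K. in_Linf (distr M borel X) (\<lambda>x. a \<phi> x k)"
    and margin_cond: "C_mt > 0" "\<alpha> > 0"
      "\<forall>\<phi>\<in>Phi. \<forall>t>0. measure M {\<omega>\<in>space M. margin K (a \<phi> (X \<omega>)) \<le> t} \<le> C_mt * t powr \<alpha>"
    and bounds: "B_Y > 0" "B_f > 0"
      "AE \<omega> in M. \<bar>Y \<omega>\<bar> \<le> B_Y"
      "\<forall>k<K. \<forall>x\<in>Xset. \<forall>t\<in>Theta k. \<bar>f k t x\<bar> \<le> B_f"
    and topspace_T: "topspace T = (PiE {..<K} Theta) \<times> Phi"
    and compact_T: "compact_space T"
    and f_cont: "\<forall>k<K. L2_continuous T (distr M borel X) (\<lambda>p. f k (fst p k))"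
    and a_cont_L2: "\<forall>k<K. L2_continuous T (distr M borel X) (\<lambda>p x. a (snd p) x k)"
    and a_cont_Linf: "\<forall>k<K. Linf_continuous T (distr M borel X) (\<lambda>p x. a (snd p) x k)"
  shows "gamma_converges T (\<lambda>\<tau> p. soft_risk M X Y K f a \<tau> p) (hard_risk M X Y K f a)
    \<and> (\<forall>g p. (\<forall>\<tau>>0. g \<tau> \<in> topspace T) \<and> limitin T g p (at_right 0) \<longrightarrow>
          ereal (hard_risk M X Y K f a p)
            \<le> Liminf (at_right 0) (\<lambda>\<tau>. ereal (soft_risk M X Y K f a \<tau> (g \<tau>))))
    \<and> (\<forall>p\<in>topspace T. \<exists>g. (\<forall>\<tau>>0. g \<tau> \<in> topspace T) \<and> limitin T g p (at_right 0) \<and>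
          Limsup (at_right 0) (\<lambda>\<tau>. ereal (soft_risk M X Y K f a \<tau> (g \<tau>)))
            \<le> ereal (hard_risk M X Y K f a p))
    \<and> (\<forall>g. (\<forall>\<tau>>0. g \<tau> \<in> topspace T) \<and>
          ((\<lambda>\<tau>. soft_risk M X Y K f a \<tau> (g \<tau>)
                 - (INF q\<in>topspace T. soft_risk M X Y K f a \<tau> q)) \<longlongrightarrow> 0) (at_right 0)
        \<longrightarrow> compactin T (T closure_of (g ` {0<..}))
          \<and> (\<forall>p\<in>topspace T. (\<forall>U. openin T U \<and> p \<in> U \<longrightarrow> (\<exists>\<^sub>F \<tau> in at_right 0. g \<tau> \<in> U))
                \<longrightarrow> (\<forall>q\<in>topspace T. hard_risk M X Y K f a p \<le> hard_risk M X Y K f a q)))"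
proof -
  have unifF: "\<And>e. e > 0 \<Longrightarrow> \<exists>\<delta>>0. \<forall>\<tau>. 0 < \<tau> \<and> \<tau> < \<delta> \<longrightarrow>
     (\<forall>q\<in>topspace T. \<bar>soft_risk M X Y K f a \<tau> q - hard_risk M X Y K f a q\<bar> \<le> e)"
    by (rule unif[OF M K2 Xmeas XinX Ymeas f_L2 a_L2 margin_cond(1,2,3) bounds(3,4,2,1) topspace_T])
  have contF: "\<And>p e. p \<in> topspace T \<Longrightarrow> e > 0 \<Longrightarrow> \<exists>U. openin T U \<and> p \<in> U \<and>
     (\<forall>q\<in>U. \<bar>hard_risk M X Y K f a q - hard_risk M X Y K f a p\<bar> < e)"
    by (rule hard_cont[OF M K2 Xmeas XinX Ymeas f_L2 a_L2 margin_cond(1,2,3) bounds(3,4,2,1) topspace_T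
          f_cont a_cont_Linf])
  have nn: "\<And>\<tau> q. soft_risk M X Y K f a \<tau> q \<ge> 0"
    unfolding soft_risk_def by (rule integral_nonneg_AE) simp
  have A: ?thesis
    by (rule abstract_gamma[where F="\<lambda>\<tau> p. soft_risk M X Y K f a \<tau> p"
          and Fz="hard_risk M X Y K f a", OF unifF contF nn compact_T])
  show ?thesis by (rule A)
qed

end
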